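(* Let $f \in \mathrm{Inj}(\Omega)$ satisfy $(f)\mathrm{C}_{\mathrm{open}} + (f)\mathrm{C}_{\mathrm{fwd}} = 1$ and $(f)\mathrm{C}_n < \aleph_0$ for all $n \in \mathbb{Z}_+$, and let $h \in \mathrm{Alt}(\Omega)$. Then $fh \approx_{\mathrm{even}} f \approx_{\mathrm{even}} hf$.
   Context: $\Omega$ is a countably infinite set; maps are written on the right and composed left to right. $\mathrm{Inj}(\Omega)$ is the monoid of injective maps $\Omega\to\Omega$; $\mathrm{Alt}(\Omega)$ the group of even permutations moving only finitely many points. For $f\in\mathrm{Inj}(\Omega)$, a cycle of $f$ is a nonempty $\Sigma\subseteq\Omega$ such that (a) for all $\alpha\in\Omega$, $(\alpha)f\in\Sigma$ iff $\alpha\in\Sigma$, and (b) no proper nonempty subset of $\Sigma$ satisfies (a). A forward cycle is an infinite cycle $\Sigma$ with $\Sigma\setminus(\Omega)f\ne\emptyset$; an open cycle is an infinite cycle that is not forward. $(f)\mathrm{C}_n$ ($n\in\mathbb{Z}_+$) is the cardinal number of cycles of cardinality $n$; $(f)\mathrm{C}_{\mathrm{open}}$, $(f)\mathrm{C}_{\mathrm{fwd}}$ the numbers of open and forward cycles. $f\approx_{\mathrm{fin}}g$ means: $(f)\mathrm{C}_{\mathrm{open}}=(g)\mathrm{C}_{\mathrm{open}}$; $(f)\mathrm{C}_{\mathrm{fwd}}=(g)\mathrm{C}_{\mathrm{fwd}}$; $(f)\mathrm{C}_n\ne(g)\mathrm{C}_n$ for only finitely many $n$; and whenever $(f)\mathrm{C}_n\ne(g)\mathrm{C}_n$,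 both are finite. $f\approx_{\mathrm{even}} g$ means $f\approx_{\mathrm{fin}}g$ and $\sum_{n\in\mathbb{Z}_+}((f)\mathrm{C}_n-(g)\mathrm{C}_n)$ is an even integer, where a term is $0$ whenever $(f)\mathrm{C}_n=(g)\mathrm{C}_n$ (even if infinite). *)

theory Defs
  imports Main "HOL-Library.Extended_Nat" "HOL-Library.Countable_Set" "HOL-Combinatorics.Permutations"
begin

text \<open>Omega is modelled as the universe of a type 'a (countably infinite by assumption).
Maps written on the right and composed left to right: the product f h (first f, then h)
is the HOL function h \<circ> f.\<close>

text \<open>Cardinal of a set of cycles (at most countably many cycles occur): finite card or infinity.\<close>
definition ecard :: "'b set \<Rightarrow> enat" where
  "ecard S = (if finite S then enat (card S) else \<infinity>)"

definition inv_closed :: "('a \<Rightarrow> 'a) \<Rightarrow> 'a set \<Rightarrow> bool" where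
  "inv_closed f S \<longleftrightarrow> (\<forall>a. f a \<in> S \<longleftrightarrow> a \<in> S)"

definition is_cycle :: "('a \<Rightarrow> 'a) \<Rightarrow> 'a set \<Rightarrow> bool" where
  "is_cycle f S \<longleftrightarrow> S \<noteq> {} \<and> inv_closed f S \<and>
     (\<forall>T. T \<subset> S \<and> T \<noteq> {} \<longrightarrow> \<not> inv_closed f T)"

definition fwd_cycle :: "('a \<Rightarrow> 'a) \<Rightarrow> 'a set \<Rightarrow> bool" where
  "fwd_cycle f S \<longleftrightarrow> is_cycle f S \<and> infinite S \<and> S - range f \<noteq> {}"

definition open_cycle :: "('a \<Rightarrow> 'a) \<Rightarrow> 'a set \<Rightarrow> bool" where
  "open_cycle f S \<longleftrightarrow> is_cycle f S \<and> infinite S \<and> \<not> (S - range f \<noteq> {})"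

definition Cn :: "('a \<Rightarrow> 'a) \<Rightarrow> nat \<Rightarrow> enat" where
  "Cn f n = ecard {S. is_cycle f S \<and> finite S \<and> card S = n}"

definition Copen :: "('a \<Rightarrow> 'a) \<Rightarrow> enat" where
  "Copen f = ecard {S. open_cycle f S}"

definition Cfwd :: "('a \<Rightarrow> 'a) \<Rightarrow> enat" where
  "Cfwd f = ecard {S. fwd_cycle f S}"

definition approx_fin :: "('a \<Rightarrow> 'a) \<Rightarrow> ('a \<Rightarrow> 'a) \<Rightarrow> bool" where
  "approx_fin f g \<longleftrightarrow> Copen f = Copen g \<and> Cfwd f = Cfwd g \<and>
     finite {n. n > 0 \<and> Cn f n \<noteq> Cn g n} \<and>
     (\<forall>n>0. Cn f n \<noteq> Cn g n \<longrightarrow> Cn f n \<noteq> \<infinity> \<and> Cn g n \<noteq> \<infinity>)"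

definition approx_even :: "('a \<Rightarrow> 'a) \<Rightarrow> ('a \<Rightarrow> 'a) \<Rightarrow> bool" where
  "approx_even f g \<longleftrightarrow> approx_fin f g \<and>
     even (\<Sum>n\<in>{n. n > 0 \<and> Cn f n \<noteq> Cn g n}.
             int (the_enat (Cn f n)) - int (the_enat (Cn g n)))"

end

theory Submission
  imports Defs
begin


definition rel :: "('a \<Rightarrow> 'a) \<Rightarrow> 'a \<Rightarrow> 'a \<Rightarrow> bool" where
  "rel g x y \<longleftrightarrow> (\<exists>m n. (g^^m) x = (g^^n) y)"

definition cls :: "('a \<Rightarrow> 'a) \<Rightarrow> 'a \<Rightarrow> 'a set" where
  "cls g x = {y. rel g x y}"

lemma fp_add: "(f^^(m+n)) x = (f^^m) ((f^^n) x)"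
  by (simp add: funpow_add)

lemma fp_comm: "(f^^m) ((f^^n) x) = (f^^n) ((f^^m) x)"
proof -
  have "(f^^m) ((f^^n) x) = (f^^(m+n)) x" by (simp add: fp_add)
  also have "\<dots> = (f^^(n+m)) x" by (simp add: add.commute)
  also have "\<dots> = (f^^n) ((f^^m) x)" by (simp add: fp_add)
  finally show ?thesis .
qed

lemma fp_Suc': "(f^^(Suc n)) x = (f^^n) (f x)"
  by (simp add: funpow_swap1)

lemma rel_refl: "rel g x x" unfolding rel_def by blast
lemma rel_sym: "rel g x y \<Longrightarrow> rel g y x" unfolding rel_def by metis
lemma rel_trans: "rel g x y \<Longrightarrow> rel g y z \<Longrightarrow> rel g x z"
proof -
  assume "rel g x y" "rel g y z"
  then obtain m n p q where 1: "(g^^m) x = (g^^n) y" and 2: "(g^^p) y = (g^^q) z"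
    unfolding rel_def by blast
  have "(g^^(p+m)) x = (g^^p) ((g^^m) x)" by (simp add: fp_add)
  also have "\<dots> = (g^^p) ((g^^n) y)" using 1 by simp
  also have "\<dots> = (g^^n) ((g^^p) y)" by (rule fp_comm)
  also have "\<dots> = (g^^(n+q)) z" using 2 by (simp add: fp_add)
  finally show ?thesis unfolding rel_def by blast
qed

lemma cls_self: "x \<in> cls g x" unfolding cls_def by (simp add: rel_refl)

lemma cls_eq: assumes "rel g x y" shows "cls g x = cls g y"
proof -
  have yx: "rel g y x" using assms by (rule rel_sym)
  show ?thesis unfolding cls_def using rel_trans[OF assms] rel_trans[OF yx] by blast
qed

lemma cls_eq_iff: "cls g x = cls g y \<longleftrightarrow> rel g x y"
proof
  assume "cls g x = cls g y"
  then have "y \<in> cls g x" using cls_self[of y g] by simp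
  then show "rel g x y" unfolding cls_def by simp
qed (rule cls_eq)

lemma rel_funpow: "rel g x ((g^^k) x)"
  unfolding rel_def by (intro exI[of _ k] exI[of _ 0]) simp

lemma inv_closed_funpow: assumes "inv_closed g T" shows "(g^^n) y \<in> T \<longleftrightarrow> y \<in> T"
proof (induction n arbitrary: y)
  case 0 then show ?case by simp
next
  case (Suc n)
  have "(g^^(Suc n)) y = (g^^n) (g y)" by (rule fp_Suc')
  then have "(g^^(Suc n)) y \<in> T \<longleftrightarrow> g y \<in> T" using Suc by simp
  also have "\<dots> \<longleftrightarrow> y \<in> T" using assms unfolding inv_closed_def by blast
  finally show ?case .
qed

lemma inv_closed_cls: "inv_closed g (cls g x)"
  unfolding inv_closed_def
proof (intro allI iffI)
  fix a assume "g a \<in> cls g x"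
  then obtain m n where "(g^^m) x = (g^^n) (g a)" unfolding cls_def rel_def by blast
  then have "(g^^m) x = (g^^(Suc n)) a" by (simp only: fp_Suc')
  then show "a \<in> cls g x" unfolding cls_def rel_def by blast
next
  fix a assume "a \<in> cls g x"
  then obtain m n where e: "(g^^m) x = (g^^n) a" unfolding cls_def rel_def by blast
  have "(g^^(Suc m)) x = g ((g^^m) x)" by simp
  also have "\<dots> = g ((g^^n) a)" using e by simp
  also have "\<dots> = (g^^(Suc n)) a" by simp
  also have "\<dots> = (g^^n) (g a)" by (rule fp_Suc')
  finally show "g a \<in> cls g x" unfolding cls_def rel_def by blast
qed

lemma cls_subset: assumes "inv_closed g T" "x \<in> T" shows "cls g x \<subseteq> T"
proof
  fix y assume "y \<in> cls g x"
  then obtain m n where e: "(g^^m) x = (g^^n) y" unfolding cls_def rel_def by blast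
  have "(g^^m) x \<in> T" using assms inv_closed_funpow by fast
  then have "(g^^n) y \<in> T" using e by simp
  then show "y \<in> T" using assms inv_closed_funpow by fast
qed

lemma is_cycle_cls: "is_cycle g (cls g x)"
  unfolding is_cycle_def
proof (intro conjI allI impI)
  show "cls g x \<noteq> {}" using cls_self by fast
  show "inv_closed g (cls g x)" by (rule inv_closed_cls)
  fix T assume T: "T \<subset> cls g x \<and> T \<noteq> {}"
  show "\<not> inv_closed g T"
  proof
    assume ic: "inv_closed g T"
    obtain y where y: "y \<in> T" using T by fast
    then have "cls g y \<subseteq> T" using cls_subset[OF ic] by simp
    moreover have "rel g x y" using y T unfolding cls_def by fast
    ultimately have "cls g x \<subseteq> T" using cls_eq[of g x y] by simp
    moreover have "T \<subseteq> cls g x" "T \<noteq> cls g x" using T by (simp_all add: psubset_eq)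
    ultimately show False by (simp add: subset_antisym)
  qed
qed

lemma cycle_eq_cls: assumes "is_cycle g S" "x \<in> S" shows "S = cls g x"
proof (rule ccontr)
  assume ne: "S \<noteq> cls g x"
  have ic: "inv_closed g S" using assms(1) unfolding is_cycle_def by simp
  have "cls g x \<subseteq> S" using cls_subset[OF ic assms(2)] .
  then have "cls g x \<subset> S" using ne by fast
  moreover have "cls g x \<noteq> {}" using cls_self[of x g] by fast
  ultimately have "\<not> inv_closed g (cls g x)" using assms(1) unfolding is_cycle_def by simp
  then show False using inv_closed_cls by fast
qed

lemma funpow_cancel: fixes g :: "'a \<Rightarrow> 'a" assumes "inj g" "(g^^i) u = (g^^i) v" shows "u = v"
  using injD[OF inj_fn[OF assms(1)] assms(2)] .

lemma fp_diff: "i \<le> j \<Longrightarrow> (f^^j) x = (f^^i) ((f^^(j-i)) x)"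
  using fp_add[of i "j-i" f x] by simp

lemma rel_inj: assumes "inj g" "rel g a b" shows "\<exists>k. (g^^k) a = b \<or> (g^^k) b = a"
proof -
  obtain m n where e: "(g^^m) a = (g^^n) b" using assms unfolding rel_def by blast
  show ?thesis
  proof (cases "m \<le> n")
    case True
    then have "(g^^m) a = (g^^m) ((g^^(n-m)) b)" using e fp_diff by metis
    then show ?thesis using funpow_cancel[OF assms(1)] by metis
  next
    case False
    then have "(g^^n) ((g^^(m-n)) a) = (g^^n) b" using e fp_diff[of n m g a] by simp
    then show ?thesis using funpow_cancel[OF assms(1)] by metis
  qed
qed

lemma periodic_cls: assumes "inj g" "0 < n" "(g^^n) x = x"
  shows "cls g x = (\<lambda>i. (g^^i) x) ` {..<n}"
proof
  show "(\<lambda>i. (g^^i) x) ` {..<n} \<subseteq> cls g x" unfolding cls_def by (auto simp: rel_funpow)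
  show "cls g x \<subseteq> (\<lambda>i. (g^^i) x) ` {..<n}"
  proof
    fix y assume "y \<in> cls g x"
    then obtain k where kk: "(g^^k) x = y \<or> (g^^k) y = x" using rel_inj[OF assms(1)] unfolding cls_def by blast
    have "\<exists>j. (g^^j) x = y"
    proof (cases "(g^^k) x = y")
      case True then show ?thesis by blast
    next
      case False
      then have ky: "(g^^k) y = x" using kk by blast
      have nk: "(g^^(n*k)) x = x" using assms(3) by (induction k) (auto simp: funpow_add)
      have "k \<le> n*k" using assms(2) by simp
      then have "(g^^(n*k)) x = (g^^k) ((g^^(n*k - k)) x)" by (rule fp_diff)
      then have "(g^^k) ((g^^(n*k - k)) x) = (g^^k) y" using nk ky by simp
      then show ?thesis using funpow_cancel[OF assms(1)] by blast
    qed
    then obtain j where j: "(g^^j) x = y" by blast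
    then have "(g^^(j mod n)) x = y" using funpow_mod_eq[where f=g and n=n and x=x and m=j] assms by simp
    then show "y \<in> (\<lambda>i. (g^^i) x) ` {..<n}" using assms(2) by auto
  qed
qed

lemma finite_cls_periodic: assumes "inj g" "finite (cls g x)" shows "\<exists>n>0. (g^^n) x = x"
proof -
  have "(\<lambda>i. (g^^i) x) ` UNIV \<subseteq> cls g x" unfolding cls_def by (auto simp: rel_funpow)
  then have "finite (range (\<lambda>i. (g^^i) x))" using assms(2) finite_subset by blast
  then have "\<not> inj (\<lambda>i. (g^^i) x)" using finite_imageD by blast
  then obtain i j where ij: "(g^^i) x = (g^^j) x" "i < j"
    unfolding inj_def by (metis linorder_neqE_nat)
  then have "(g^^i) x = (g^^i) ((g^^(j-i)) x)" using fp_diff[of i j g x] by simp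
  then have e: "(g^^(j-i)) x = x" using funpow_cancel[OF assms(1)] by metis
  have "j - i > 0" using ij by simp
  then show ?thesis using e by blast
qed

lemma aperiodic_inj: assumes "inj g" "\<forall>m>0. (g^^m) a \<noteq> a" shows "inj (\<lambda>i. (g^^i) a)"
proof -
  have *: False if "(g^^i) a = (g^^j) a" "i < j" for i j
  proof -
    have "(g^^i) a = (g^^i) ((g^^(j-i)) a)" using that fp_diff[of i j g a] by simp
    then show False using funpow_cancel[OF assms(1)] assms(2) that by (metis zero_less_diff)
  qed
  show ?thesis
    by (rule injI) (metis * linorder_neqE_nat)
qed

lemma infinite_aperiodic: assumes "inj g" "infinite (cls g a)" shows "\<forall>m>0. (g^^m) a \<noteq> a"
  using periodic_cls[OF assms(1)] assms(2) by (metis finite_imageI finite_lessThan)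



abbreviation tr :: "'a \<Rightarrow> 'a \<Rightarrow> 'a \<Rightarrow> 'a" where "tr \<equiv> Transposition.transpose"

lemma inj_tr: "inj (tr a b)"
  by (rule injI) (rule transpose_eq_imp_eq)

lemma inj_trg: "inj g \<Longrightarrow> inj (tr a b \<circ> g)"
  using inj_tr by (rule inj_compose)

lemma tr_tr_g: "tr a b \<circ> (tr a b \<circ> g) = g"
  by (simp add: fun_eq_iff)

lemma P_cls:
  fixes g :: "'a \<Rightarrow> 'a"
  assumes ig: "inj g" and ab: "a \<noteq> b" and k0: "0 < k" and kb: "(g^^k) a = b"
    and mid: "\<And>j. 0 < j \<Longrightarrow> j < k \<Longrightarrow> (g^^j) a \<noteq> a \<and> (g^^j) a \<noteq> b"
  shows "cls (tr a b \<circ> g) a = (\<lambda>j. (g^^j) a) ` {..<k}"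
proof -
  define g' where "g' = tr a b \<circ> g"
  have pw: "(g'^^j) a = (g^^j) a" if "j < k" for j
    using that
  proof (induction j)
    case 0 then show ?case by simp
  next
    case (Suc j)
    have "(g'^^(Suc j)) a = g' ((g'^^j) a)" by simp
    also have "\<dots> = g' ((g^^j) a)" using Suc by simp
    also have "\<dots> = tr a b ((g^^(Suc j)) a)" unfolding g'_def by simp
    also have "\<dots> = (g^^(Suc j)) a" using mid[of "Suc j"] Suc.prems by (simp add: transpose_apply_other)
    finally show ?case .
  qed
  have kk: "k = Suc (k - 1)" using k0 by simp
  have "(g'^^k) a = g' ((g'^^(k-1)) a)" by (subst kk) simp
  also have "\<dots> = g' ((g^^(k-1)) a)" using pw k0 by simp
  also have "\<dots> = tr a b ((g^^(Suc (k-1))) a)" unfolding g'_def by simp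
  also have "\<dots> = a" using kk kb by simp
  finally have per: "(g'^^k) a = a" .
  have "inj g'" unfolding g'_def using ig by (rule inj_trg)
  from periodic_cls[OF this k0 per] have "cls g' a = (\<lambda>i. (g'^^i) a) ` {..<k}" .
  also have "\<dots> = (\<lambda>j. (g^^j) a) ` {..<k}" using pw by (intro image_cong) auto
  finally show ?thesis unfolding g'_def .
qed

definition meet :: "('a \<Rightarrow> 'a) \<Rightarrow> 'a set \<Rightarrow> ('a set \<Rightarrow> bool) \<Rightarrow> 'a set set" where
  "meet g F Q = {S. is_cycle g S \<and> Q S \<and> S \<inter> F \<noteq> {}}"

lemma meet_eq: "meet g {a,b} Q = {S \<in> {cls g a, cls g b}. Q S}"
proof (rule set_eqI)
  fix S
  show "S \<in> meet g {a,b} Q \<longleftrightarrow> S \<in> {S \<in> {cls g a, cls g b}. Q S}"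
  proof
    assume "S \<in> meet g {a,b} Q"
    then have c: "is_cycle g S" and q: "Q S" and ab: "a \<in> S \<or> b \<in> S" unfolding meet_def by auto
    from ab have "S = cls g a \<or> S = cls g b"
    proof
      assume "a \<in> S" then show ?thesis using cycle_eq_cls[OF c] by simp
    next
      assume "b \<in> S" then show ?thesis using cycle_eq_cls[OF c] by simp
    qed
    then show "S \<in> {S \<in> {cls g a, cls g b}. Q S}" using q by auto
  next
    assume "S \<in> {S \<in> {cls g a, cls g b}. Q S}"
    then have "S = cls g a \<or> S = cls g b" "Q S" by auto
    then show "S \<in> meet g {a,b} Q" unfolding meet_def using is_cycle_cls[of g a] is_cycle_cls[of g b] cls_self[of a g] cls_self[of b g] by auto
  qed
qed

lemma least_period_ex:
  fixes g :: "'a \<Rightarrow> 'a"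
  assumes "inj g" "finite (cls g a)"
  shows "\<exists>n. 0 < n \<and> (g^^n) a = a \<and> (\<forall>j. 0 < j \<and> j < n \<longrightarrow> (g^^j) a \<noteq> a) \<and>
    (\<forall>i j. i < j \<and> j < n \<longrightarrow> (g^^i) a \<noteq> (g^^j) a)"
proof -
  define n where "n = (LEAST n. 0 < n \<and> (g^^n) a = a)"
  have ex: "\<exists>n. 0 < n \<and> (g^^n) a = a" using finite_cls_periodic[OF assms] by blast
  have n: "0 < n \<and> (g^^n) a = a" unfolding n_def using LeastI_ex[OF ex] .
  have mn: "(g^^j) a \<noteq> a" if "0 < j" "j < n" for j
    using not_less_Least[of j "\<lambda>n. 0 < n \<and> (g^^n) a = a"] that unfolding n_def by blast
  have ds: "(g^^i) a \<noteq> (g^^j) a" if "i < j" "j < n" for i j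
  proof
    assume e: "(g^^i) a = (g^^j) a"
    have "(g^^i) a = (g^^i) ((g^^(j-i)) a)" using e fp_diff[of i j g a] that by simp
    then have "(g^^(j-i)) a = a" using funpow_cancel[OF assms(1)] by metis
    then show False using mn[of "j-i"] that by simp
  qed
  show ?thesis using n mn ds by blast
qed



lemma split_core:
  fixes g :: "'a \<Rightarrow> 'a"
  assumes ig: "inj g" and ab: "a \<noteq> b" and k0: "0 < k" and kb: "(g^^k) a = b"
  shows "card (meet (tr a b \<circ> g) {a,b} finite) = Suc (card (meet g {a,b} finite)) \<and>
         card (meet (tr a b \<circ> g) {a,b} (\<lambda>S. infinite S)) = card (meet g {a,b} (\<lambda>S. infinite S))"
proof -
  define g' where "g' = tr a b \<circ> g"
  have cb: "cls g b = cls g a" using cls_eq[OF rel_funpow[of g a k]] kb by simp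
  have mg: "meet g {a,b} Q = {S \<in> {cls g a}. Q S}" for Q using meet_eq[of g a b Q] cb by simp
  have mg': "meet g' {a,b} Q = {S \<in> {cls g' a, cls g' b}. Q S}" for Q by (rule meet_eq)
  show ?thesis
  proof (cases "finite (cls g a)")
    case True
    obtain n where n0: "0 < n" and na: "(g^^n) a = a"
      and mn: "\<And>j. 0 < j \<Longrightarrow> j < n \<Longrightarrow> (g^^j) a \<noteq> a"
      and ds: "\<And>i j. i < j \<Longrightarrow> j < n \<Longrightarrow> (g^^i) a \<noteq> (g^^j) a"
    proof -
      from least_period_ex[OF ig True] obtain n where P: "0 < n \<and> (g^^n) a = a \<and> (\<forall>j. 0 < j \<and> j < n \<longrightarrow> (g^^j) a \<noteq> a) \<and>
        (\<forall>i j. i < j \<and> j < n \<longrightarrow> (g^^i) a \<noteq> (g^^j) a)" ..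
      show ?thesis by (rule that) (use P in auto)
    qed
    define k' where "k' = k mod n"
    have bk': "(g^^k') a = b" unfolding k'_def using funpow_mod_eq[where f=g and n=n and x=a and m=k] na kb by simp
    have k'n: "k' < n" unfolding k'_def using n0 by simp
    have k'0: "0 < k'" using bk' ab by (cases k') auto
    have ca: "cls g' a = (\<lambda>j. (g^^j) a) ` {..<k'}" unfolding g'_def
    proof (rule P_cls[OF ig ab k'0 bk'])
      fix j assume "0 < j" "j < k'"
      then show "(g^^j) a \<noteq> a \<and> (g^^j) a \<noteq> b" using mn[of j] ds[of j k'] k'n bk' by auto
    qed
    have jk: "(g^^j) b = (g^^(j+k')) a" for j using bk' fp_add[of j k' g a] by simp
    have nb: "(g^^(n-k')) b = a" using jk[of "n-k'"] k'n na by simp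
    have "cls (tr b a \<circ> g) b = (\<lambda>j. (g^^j) b) ` {..<n-k'}"
    proof (rule P_cls[OF ig ab[symmetric] _ nb])
      show "0 < n - k'" using k'n by simp
      fix j assume j: "0 < j" "j < n - k'"
      have jn: "j + k' < n" "0 < j + k'" "k' < j + k'" using j by auto
      have "(g^^(j+k')) a \<noteq> a" using mn[OF jn(2) jn(1)] .
      moreover have "(g^^k') a \<noteq> (g^^(j+k')) a" using ds[OF jn(3) jn(1)] .
      ultimately show "(g^^j) b \<noteq> b \<and> (g^^j) b \<noteq> a" unfolding jk using bk' by auto
    qed
    then have cb': "cls g' b = (\<lambda>j. (g^^j) b) ` {..<n-k'}" unfolding g'_def by (simp add: transpose_commute)
    have "a \<notin> cls g' b"
    proof
      assume "a \<in> cls g' b"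
      then obtain j where j: "j < n - k'" "a = (g^^j) b" unfolding cb' by auto
      then have e: "(g^^0) a = (g^^(j+k')) a" using jk[of j] by simp
      have jn: "0 < j + k'" "j + k' < n" using j k'0 by auto
      show False using ds[OF jn] e by simp
    qed
    then have ne: "cls g' a \<noteq> cls g' b" using cls_self[of a g'] by auto
    have fa: "finite (cls g' a)" unfolding ca by simp
    have fb: "finite (cls g' b)" unfolding cb' by simp
    have "meet g' {a,b} finite = {cls g' a, cls g' b}" unfolding mg' using fa fb by auto
    then have 1: "card (meet g' {a,b} finite) = 2" using ne by simp
    have 2: "meet g' {a,b} (\<lambda>S. infinite S) = {}" unfolding mg' using fa fb by auto
    have 3: "meet g {a,b} finite = {cls g a}" unfolding mg using True by auto
    have 4: "meet g {a,b} (\<lambda>S. infinite S) = {}" unfolding mg using True by auto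
    show ?thesis using 1 2 3 4 unfolding g'_def by simp
  next
    case False
    have ap: "\<forall>m>0. (g^^m) a \<noteq> a" using infinite_aperiodic[OF ig False] .
    have ia: "inj (\<lambda>i. (g^^i) a)" using aperiodic_inj[OF ig ap] .
    have ieq: "(g^^i) a = (g^^j) a \<longleftrightarrow> i = j" for i j using injD[OF ia, of i j] by auto
    have ca: "cls g' a = (\<lambda>j. (g^^j) a) ` {..<k}" unfolding g'_def
    proof (rule P_cls[OF ig ab k0 kb])
      fix j assume "0 < j" "j < k"
      then show "(g^^j) a \<noteq> a \<and> (g^^j) a \<noteq> b"
        using ieq[of j 0] ieq[of j k] kb by auto
    qed
    have fa: "finite (cls g' a)" unfolding ca by simp
    have pw: "(g'^^j) b = (g^^(j+k)) a" for j
    proof (induction j)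
      case 0 then show ?case using kb by simp
    next
      case (Suc j)
      have "(g'^^(Suc j)) b = g' ((g^^(j+k)) a)" using Suc by simp
      also have "\<dots> = tr a b ((g^^(Suc j + k)) a)" unfolding g'_def by simp
      also have "\<dots> = (g^^(Suc j + k)) a"
        using ieq[of "Suc j + k" 0] ieq[of "Suc j + k" k] kb by (simp add: transpose_apply_other)
      finally show ?case .
    qed
    have "range (\<lambda>j. (g'^^j) b) \<subseteq> cls g' b" unfolding cls_def by (auto simp: rel_funpow)
    moreover have "inj (\<lambda>j. (g'^^j) b)" unfolding pw by (rule injI) (simp add: ieq)
    ultimately have fb: "infinite (cls g' b)" using range_inj_infinite finite_subset by blast
    have 1: "meet g' {a,b} finite = {cls g' a}" unfolding mg' using fa fb by auto
    have 2: "meet g' {a,b} (\<lambda>S. infinite S) = {cls g' b}" unfolding mg' using fa fb by auto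
    have 3: "meet g {a,b} finite = {}" unfolding mg using False by auto
    have 4: "meet g {a,b} (\<lambda>S. infinite S) = {cls g a}" unfolding mg using False by auto
    show ?thesis using 1 2 3 4 unfolding g'_def by simp
  qed
qed

lemma meet_sym: "meet g {b,a} Q = meet g {a,b} Q"
  by (simp add: insert_commute)

lemma split:
  fixes g :: "'a \<Rightarrow> 'a"
  assumes ig: "inj g" and ab: "a \<noteq> b" and r: "rel g a b"
  shows "card (meet (tr a b \<circ> g) {a,b} finite) = Suc (card (meet g {a,b} finite)) \<and>
         card (meet (tr a b \<circ> g) {a,b} (\<lambda>S. infinite S)) = card (meet g {a,b} (\<lambda>S. infinite S))"
proof -
  obtain k where k: "(g^^k) a = b \<or> (g^^k) b = a" using rel_inj[OF ig r] by blast
  then have k0: "0 < k" using ab by (cases k) auto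
  from k show ?thesis
  proof
    assume "(g^^k) a = b" then show ?thesis using split_core[OF ig ab k0] by blast
  next
    assume "(g^^k) b = a"
    from split_core[OF ig ab[symmetric] k0 this] show ?thesis
      by (simp add: meet_sym transpose_commute)
  qed
qed

lemma merge:
  fixes g :: "'a \<Rightarrow> 'a"
  assumes ig: "inj g" and ab: "a \<noteq> b" and nr: "\<not> rel g a b" and fin: "finite (cls g a)"
  shows "rel (tr a b \<circ> g) a b"
proof -
  define g' where "g' = tr a b \<circ> g"
  obtain n where n0: "0 < n" and na: "(g^^n) a = a"
      and mn: "\<And>j. 0 < j \<Longrightarrow> j < n \<Longrightarrow> (g^^j) a \<noteq> a"
      and ds: "\<And>i j. i < j \<Longrightarrow> j < n \<Longrightarrow> (g^^i) a \<noteq> (g^^j) a"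
    proof -
      from least_period_ex[OF ig fin] obtain n where P: "0 < n \<and> (g^^n) a = a \<and> (\<forall>j. 0 < j \<and> j < n \<longrightarrow> (g^^j) a \<noteq> a) \<and>
        (\<forall>i j. i < j \<and> j < n \<longrightarrow> (g^^i) a \<noteq> (g^^j) a)" ..
      show ?thesis by (rule that) (use P in auto)
    qed
  have pw: "(g'^^j) a = (g^^j) a" if "j < n" for j
    using that
  proof (induction j)
    case 0 then show ?case by simp
  next
    case (Suc j)
    have nb: "(g^^(Suc j)) a \<noteq> b"
    proof
      assume "(g^^(Suc j)) a = b"
      then show False using nr rel_funpow[of g a "Suc j"] by simp
    qed
    have "(g'^^(Suc j)) a = g' ((g^^j) a)" using Suc by simp
    also have "\<dots> = tr a b ((g^^(Suc j)) a)" unfolding g'_def by simp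
    also have "\<dots> = (g^^(Suc j)) a" using mn[of "Suc j"] Suc.prems nb by (simp add: transpose_apply_other)
    finally show ?case .
  qed
  have sn: "Suc (n - 1) = n" using n0 by simp
  have "(g'^^n) a = (g'^^(Suc (n-1))) a" using sn by simp
  also have "\<dots> = g' ((g'^^(n-1)) a)" by simp
  also have "\<dots> = g' ((g^^(n-1)) a)" using pw n0 by simp
  also have "\<dots> = tr a b ((g^^(Suc (n-1))) a)" unfolding g'_def by simp
  also have "\<dots> = tr a b ((g^^n) a)" using sn by simp
  also have "\<dots> = b" using na by simp
  finally have "(g'^^n) a = (g'^^0) b" by simp
  then show ?thesis unfolding g'_def rel_def by blast
qed



lemma ecard_Un: "A \<inter> B = {} \<Longrightarrow> ecard (A \<union> B) = ecard A + ecard B"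
  unfolding ecard_def by (auto simp: card_Un_disjoint)

lemma ecard_image: "inj_on f A \<Longrightarrow> ecard (f ` A) = ecard A"
  unfolding ecard_def by (simp add: card_image finite_image_iff)

lemma ecard_finite: "finite A \<Longrightarrow> ecard A = enat (card A)"
  unfolding ecard_def by simp

definition avoid :: "('a \<Rightarrow> 'a) \<Rightarrow> 'a set \<Rightarrow> ('a set \<Rightarrow> bool) \<Rightarrow> 'a set set" where
  "avoid g F Q = {S. is_cycle g S \<and> Q S \<and> S \<inter> F = {}}"

lemma finite_meet: "finite (meet g {a,b} Q)"
  unfolding meet_eq by simp

lemma ecard_cyc: "ecard {S. is_cycle g S \<and> Q S} = ecard (avoid g {a,b} Q) + enat (card (meet g {a,b} Q))"
proof -
  have "{S. is_cycle g S \<and> Q S} = avoid g {a,b} Q \<union> meet g {a,b} Q"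
    unfolding avoid_def meet_def by blast
  moreover have "avoid g {a,b} Q \<inter> meet g {a,b} Q = {}"
    unfolding avoid_def meet_def by blast
  ultimately have "ecard {S. is_cycle g S \<and> Q S} = ecard (avoid g {a,b} Q) + ecard (meet g {a,b} Q)"
    using ecard_Un by simp
  then show ?thesis using ecard_finite[OF finite_meet[of g a b Q]] by simp
qed

lemma tr_mem: "a \<notin> T \<Longrightarrow> b \<notin> T \<Longrightarrow> (tr a b y \<in> T) = (y \<in> T)"
  by (cases "y = a"; cases "y = b") auto

lemma inv_closed_tr: "a \<notin> T \<Longrightarrow> b \<notin> T \<Longrightarrow> inv_closed (tr a b \<circ> g) T = inv_closed g T"
  unfolding inv_closed_def by (simp add: tr_mem)

lemma is_cycle_tr:
  assumes "a \<notin> S" "b \<notin> S"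
  shows "is_cycle (tr a b \<circ> g) S = is_cycle g S"
proof -
  have e: "inv_closed (tr a b \<circ> g) T = inv_closed g T" if "T \<subseteq> S" for T
    using inv_closed_tr[of a T b g] assms that by blast
  have "(\<forall>T. T \<subset> S \<and> T \<noteq> {} \<longrightarrow> \<not> inv_closed (tr a b \<circ> g) T) =
        (\<forall>T. T \<subset> S \<and> T \<noteq> {} \<longrightarrow> \<not> inv_closed g T)"
    using e by (meson psubset_imp_subset)
  then show ?thesis unfolding is_cycle_def using e[of S] by simp
qed

lemma avoid_tr: "avoid (tr a b \<circ> g) {a,b} Q = avoid g {a,b} Q"
proof -
  have "(is_cycle (tr a b \<circ> g) S \<and> Q S \<and> S \<inter> {a,b} = {}) = (is_cycle g S \<and> Q S \<and> S \<inter> {a,b} = {})" for S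
  proof (cases "S \<inter> {a,b} = {}")
    case True
    then have "a \<notin> S" "b \<notin> S" by auto
    then show ?thesis using is_cycle_tr[of a S b g] by simp
  next
    case False
    then show ?thesis by blast
  qed
  then show ?thesis unfolding avoid_def by simp
qed

lemma Cfwd_range:
  fixes g :: "'a \<Rightarrow> 'a"
  assumes ig: "inj g"
  shows "Cfwd g = ecard (- range g)"
proof -
  have img: "{S. fwd_cycle g S} = cls g ` (- range g)"
  proof (rule set_eqI)
    fix S
    show "S \<in> {S. fwd_cycle g S} \<longleftrightarrow> S \<in> cls g ` (- range g)"
    proof
      assume "S \<in> {S. fwd_cycle g S}"
      then have c: "is_cycle g S" and ne: "S - range g \<noteq> {}" unfolding fwd_cycle_def by auto
      then obtain x where x: "x \<in> S" "x \<notin> range g" by blast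
      then have "S = cls g x" using cycle_eq_cls[OF c] by simp
      then show "S \<in> cls g ` (- range g)" using x by blast
    next
      assume "S \<in> cls g ` (- range g)"
      then obtain x where x: "x \<notin> range g" and S: "S = cls g x" by blast
      have inf: "infinite (cls g x)"
      proof
        assume "finite (cls g x)"
        then obtain n where n: "0 < n" "(g^^n) x = x" using finite_cls_periodic[OF ig] by blast
        have sn: "Suc (n-1) = n" using n(1) by simp
        have "(g^^n) x = (g^^(Suc (n-1))) x" using sn by simp
        also have "\<dots> = g ((g^^(n-1)) x)" by simp
        finally have "x = g ((g^^(n-1)) x)" using n(2) by simp
        moreover have "g ((g^^(n-1)) x) \<in> range g" by (rule rangeI)
        ultimately show False using x by simp
      qed
      have "x \<in> cls g x - range g" using cls_self[of x g] x by simp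
      then have "cls g x - range g \<noteq> {}" by blast
      then show "S \<in> {S. fwd_cycle g S}" unfolding fwd_cycle_def S
        using is_cycle_cls[of g x] inf by simp
    qed
  qed
  have "inj_on (cls g) (- range g)"
  proof (rule inj_onI)
    fix x y assume x: "x \<in> - range g" and y: "y \<in> - range g" and e: "cls g x = cls g y"
    have r: "rel g x y" using e cls_eq_iff[of g x y] by simp
    obtain k where k: "(g^^k) x = y \<or> (g^^k) y = x" using rel_inj[OF ig r] by blast
    have "k = 0"
    proof (rule ccontr)
      assume "k \<noteq> 0"
      then have sk: "Suc (k-1) = k" by simp
      have "(g^^k) x = (g^^(Suc (k-1))) x" "(g^^k) y = (g^^(Suc (k-1))) y" using sk by simp_all
      then have e1: "(g^^k) x = g ((g^^(k-1)) x)" and e2: "(g^^k) y = g ((g^^(k-1)) y)" by simp_all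
      have r1: "g ((g^^(k-1)) x) \<in> range g" and r2: "g ((g^^(k-1)) y) \<in> range g" by (rule rangeI)+
      from k show False
      proof
        assume "(g^^k) x = y" then show False using e1 r1 y by simp
      next
        assume "(g^^k) y = x" then show False using e2 r2 x by simp
      qed
    qed
    then show "x = y" using k by auto
  qed
  then show ?thesis unfolding Cfwd_def img by (rule ecard_image)
qed

lemma Cfwd_tr:
  fixes g :: "'a \<Rightarrow> 'a"
  assumes ig: "inj g"
  shows "Cfwd (tr a b \<circ> g) = Cfwd g"
proof -
  have "range (tr a b \<circ> g) = tr a b ` range g" by (rule image_comp[symmetric])
  then have "- range (tr a b \<circ> g) = tr a b ` (- range g)"
    using bij_image_Compl_eq[OF bij_transpose, of a b "range g"] by simp
  moreover have "ecard (tr a b ` (- range g)) = ecard (- range g)"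
    by (rule ecard_image) (rule inj_on_subset[OF inj_tr subset_UNIV])
  ultimately show ?thesis using Cfwd_range[OF ig] Cfwd_range[OF inj_trg[OF ig]] by simp
qed

lemma inf_cycles: "Copen g + Cfwd g = ecard {S. is_cycle g S \<and> infinite S}"
proof -
  have "{S. is_cycle g S \<and> infinite S} = {S. open_cycle g S} \<union> {S. fwd_cycle g S}"
    unfolding open_cycle_def fwd_cycle_def by blast
  moreover have "{S. open_cycle g S} \<inter> {S. fwd_cycle g S} = {}"
    unfolding open_cycle_def fwd_cycle_def by blast
  ultimately have "ecard {S. is_cycle g S \<and> infinite S} = ecard {S. open_cycle g S} + ecard {S. fwd_cycle g S}"
    using ecard_Un by simp
  then show ?thesis unfolding Copen_def Cfwd_def by simp
qed



definition good :: "('a \<Rightarrow> 'a) \<Rightarrow> bool" where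
  "good g \<longleftrightarrow> inj g \<and> Copen g + Cfwd g = 1 \<and> (\<forall>n>0. Cn g n < \<infinity>)"

definition dsum :: "('a \<Rightarrow> 'a) \<Rightarrow> ('a \<Rightarrow> 'a) \<Rightarrow> int" where
  "dsum f g = (\<Sum>n\<in>{n. n > 0 \<and> Cn f n \<noteq> Cn g n}. int (the_enat (Cn f n)) - int (the_enat (Cn g n)))"

lemma two_inf_cycles:
  fixes g :: "'a \<Rightarrow> 'a"
  assumes one: "ecard {S. is_cycle g S \<and> infinite S} = 1"
    and A: "is_cycle g A" "infinite A" and B: "is_cycle g B" "infinite B" and ne: "A \<noteq> B"
  shows False
proof -
  let ?I = "{S. is_cycle g S \<and> infinite S}"
  have sub: "{A, B} \<subseteq> ?I" using A B by simp
  show False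
  proof (cases "finite ?I")
    case True
    have "card {A, B} \<le> card ?I" using card_mono[OF True sub] .
    then have "2 \<le> card ?I" using ne by simp
    moreover have "enat (card ?I) = 1" using one ecard_finite[OF True] by simp
    ultimately show False by (simp add: one_enat_def)
  next
    case False
    then have "ecard ?I = \<infinity>" unfolding ecard_def by simp
    then show False using one by simp
  qed
qed

lemma counts:
  fixes g :: "'a \<Rightarrow> 'a"
  assumes gg: "good g" and ab: "a \<noteq> b"
  shows "card (meet (tr a b \<circ> g) {a,b} (\<lambda>S. infinite S)) = card (meet g {a,b} (\<lambda>S. infinite S)) \<and>
    odd (int (card (meet (tr a b \<circ> g) {a,b} finite)) - int (card (meet g {a,b} finite)))"
proof -
  have ig: "inj g" using gg unfolding good_def by simp
  show ?thesis
  proof (cases "rel g a b")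
    case True
    from split[OF ig ab True] show ?thesis by simp
  next
    case False
    have nr: "\<not> rel g a b" using False .
    define g' where "g' = tr a b \<circ> g"
    have one: "ecard {S. is_cycle g S \<and> infinite S} = 1" using gg inf_cycles[of g] unfolding good_def by simp
    have nab: "cls g a \<noteq> cls g b" using nr cls_eq_iff[of g a b] by simp
    have fin: "finite (cls g a) \<or> finite (cls g b)"
    proof (rule ccontr)
      assume "\<not> (finite (cls g a) \<or> finite (cls g b))"
      then have "infinite (cls g a)" "infinite (cls g b)" by simp_all
      then show False using two_inf_cycles[OF one is_cycle_cls _ is_cycle_cls _ nab] by simp
    qed
    have r': "rel g' a b"
    proof (cases "finite (cls g a)")
      case True
      then show ?thesis unfolding g'_def using merge[OF ig ab nr True] by simp
    next
      case False
      then have fb: "finite (cls g b)" using fin by simp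
      have "\<not> rel g b a"
      proof
        assume "rel g b a" then have "rel g a b" by (rule rel_sym)
        with nr show False by simp
      qed
      then have "rel (tr b a \<circ> g) b a" using merge[OF ig ab[symmetric] _ fb] by simp
      then have "rel (tr a b \<circ> g) b a" by (simp add: transpose_commute)
      then show ?thesis unfolding g'_def by (rule rel_sym)
    qed
    have ig': "inj g'" unfolding g'_def using ig by (rule inj_trg)
    have bk: "tr a b \<circ> g' = g" unfolding g'_def by (rule tr_tr_g)
    from split[OF ig' ab r'] show ?thesis unfolding bk g'_def[symmetric] by simp
  qed
qed



lemma sum_card_group:
  assumes fS: "finite S" and fT: "finite T" and sub: "card ` S \<subseteq> T"
  shows "(\<Sum>y\<in>T. card {x\<in>S. card x = y}) = card S"
proof -
  have "(\<Sum>y\<in>T. \<Sum>x\<in>{x\<in>S. card x = y}. (1::nat)) = (\<Sum>x\<in>S. 1)"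
    by (rule sum.group[OF fS fT sub])
  then show ?thesis by simp
qed

lemma meet_n: "{x \<in> meet h {a,b} finite. card x = n} = meet h {a,b} (\<lambda>S. finite S \<and> card S = n)"
  unfolding meet_def by auto

lemma sum_meet:
  assumes fN: "finite N" and sub: "card ` meet h {a,b} finite \<subseteq> N"
  shows "(\<Sum>n\<in>N. card (meet h {a,b} (\<lambda>S. finite S \<and> card S = n))) = card (meet h {a,b} finite)"
  using sum_card_group[OF finite_meet fN sub] unfolding meet_n .

lemma cn_split: "Cn h n = ecard (avoid h {a,b} (\<lambda>S. finite S \<and> card S = n)) +
    enat (card (meet h {a,b} (\<lambda>S. finite S \<and> card S = n)))"
  unfolding Cn_def using ecard_cyc[of h "\<lambda>S. finite S \<and> card S = n" a b] by simp

lemma meet_pos: "S \<in> meet h F finite \<Longrightarrow> 0 < card S"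
  unfolding meet_def is_cycle_def by (auto simp: card_gt_0_iff)

lemma step:
  fixes g :: "'a \<Rightarrow> 'a"
  assumes gg: "good g" and ab: "a \<noteq> b"
  shows "good (tr a b \<circ> g) \<and> Copen (tr a b \<circ> g) = Copen g \<and> Cfwd (tr a b \<circ> g) = Cfwd g \<and>
    finite {n. n > 0 \<and> Cn (tr a b \<circ> g) n \<noteq> Cn g n} \<and> odd (dsum (tr a b \<circ> g) g)"
proof -
  define g' where "g' = tr a b \<circ> g"
  have ig: "inj g" and one: "Copen g + Cfwd g = 1" and cnf: "\<And>n. n > 0 \<Longrightarrow> Cn g n < \<infinity>"
    using gg unfolding good_def by auto
  have ig': "inj g'" unfolding g'_def using ig by (rule inj_trg)
  have ci: "card (meet g' {a,b} (\<lambda>S. infinite S)) = card (meet g {a,b} (\<lambda>S. infinite S))"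
    and ocf: "odd (int (card (meet g' {a,b} finite)) - int (card (meet g {a,b} finite)))"
    using counts[OF gg ab] unfolding g'_def by auto
  have av_inf: "avoid g' {a,b} (\<lambda>S. infinite S) = avoid g {a,b} (\<lambda>S. infinite S)"
    unfolding g'_def by (rule avoid_tr)
  have inf_eq: "ecard {S. is_cycle g' S \<and> infinite S} = ecard {S. is_cycle g S \<and> infinite S}"
    using ecard_cyc[of g' "\<lambda>S. infinite S" a b] ecard_cyc[of g "\<lambda>S. infinite S" a b] av_inf ci by simp
  have fwd: "Cfwd g' = Cfwd g" unfolding g'_def by (rule Cfwd_tr[OF ig])
  have "Copen g' + Cfwd g' = ecard {S. is_cycle g' S \<and> infinite S}" by (rule inf_cycles)
  also have "\<dots> = ecard {S. is_cycle g S \<and> infinite S}" by (rule inf_eq)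
  also have "\<dots> = Copen g + Cfwd g" by (rule inf_cycles[symmetric])
  also have "\<dots> = 1" by (rule one)
  finally have one': "Copen g' + Cfwd g' = 1" .
  have cfin: "Cfwd g \<noteq> \<infinity>"
  proof
    assume "Cfwd g = \<infinity>"
    then have "Copen g + Cfwd g = \<infinity>" by simp
    with one show False by simp
  qed
  have "Cfwd g + Copen g' = Copen g' + Cfwd g'" using fwd by (simp only: add.commute)
  also have "\<dots> = Copen g + Cfwd g" using one one' by (simp only:)
  also have "\<dots> = Cfwd g + Copen g" by (rule add.commute)
  finally have "Cfwd g + Copen g' = Cfwd g + Copen g" .
  then have op: "Copen g' = Copen g" using cfin by (simp only: enat_add_left_cancel) simp
  define av where "av n = ecard (avoid g {a,b} (\<lambda>S. finite S \<and> card S = n))" for n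
  define mg where "mg n = card (meet g {a,b} (\<lambda>S. finite S \<and> card S = n))" for n
  define mg' where "mg' n = card (meet g' {a,b} (\<lambda>S. finite S \<and> card S = n))" for n
  have cn: "Cn g n = av n + enat (mg n)" for n unfolding av_def mg_def by (rule cn_split)
  have cn': "Cn g' n = av n + enat (mg' n)" for n
    unfolding av_def mg'_def using cn_split[of g' n a b] avoid_tr[of a b g] unfolding g'_def by simp
  have avf: "av n \<noteq> \<infinity>" if "n > 0" for n
  proof
    assume "av n = \<infinity>"
    then have "Cn g n = \<infinity>" using cn by simp
    with cnf[OF that] show False by simp
  qed
  have cnf': "Cn g' n < \<infinity>" if np: "n > 0" for n
  proof -
    obtain v where "av n = enat v" using avf[OF np] by (cases "av n") auto
    then show ?thesis using cn'[of n] by simp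
  qed
  have good': "good g'" unfolding good_def using ig' one' cnf' by blast
  define N where "N = card ` (meet g {a,b} finite \<union> meet g' {a,b} finite)"
  have fN: "finite N" unfolding N_def using finite_meet[of g a b finite] finite_meet[of g' a b finite] by simp
  have Npos: "0 < n" if "n \<in> N" for n using that meet_pos unfolding N_def by blast
  have zero: "mg n = 0 \<and> mg' n = 0" if "n \<notin> N" for n
  proof -
    have "meet g {a,b} (\<lambda>S. finite S \<and> card S = n) = {}"
    proof (rule ccontr)
      assume "meet g {a,b} (\<lambda>S. finite S \<and> card S = n) \<noteq> {}"
      then obtain S where "S \<in> meet g {a,b} (\<lambda>S. finite S \<and> card S = n)" by blast
      then have "S \<in> meet g {a,b} finite" "card S = n" unfolding meet_def by auto
      then have "n \<in> N" unfolding N_def by blast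
      with that show False by simp
    qed
    moreover have "meet g' {a,b} (\<lambda>S. finite S \<and> card S = n) = {}"
    proof (rule ccontr)
      assume "meet g' {a,b} (\<lambda>S. finite S \<and> card S = n) \<noteq> {}"
      then obtain S where "S \<in> meet g' {a,b} (\<lambda>S. finite S \<and> card S = n)" by blast
      then have "S \<in> meet g' {a,b} finite" "card S = n" unfolding meet_def by auto
      then have "n \<in> N" unfolding N_def by blast
      with that show False by simp
    qed
    ultimately show ?thesis unfolding mg_def mg'_def by simp
  qed
  define D where "D = {n. n > 0 \<and> Cn g' n \<noteq> Cn g n}"
  have DN: "D \<subseteq> N"
  proof
    fix n assume "n \<in> D"
    then have "Cn g' n \<noteq> Cn g n" unfolding D_def by simp
    show "n \<in> N"
    proof (rule ccontr)
      assume "n \<notin> N"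
      then have "mg n = 0" "mg' n = 0" using zero[of n] by auto
      then have "Cn g' n = Cn g n" using cn[of n] cn'[of n] by simp
      with \<open>Cn g' n \<noteq> Cn g n\<close> show False by simp
    qed
  qed
  have fD: "finite D" using finite_subset[OF DN fN] .
  define trm where "trm n = int (the_enat (Cn g' n)) - int (the_enat (Cn g n))" for n
  have tN: "trm n = int (mg' n) - int (mg n)" if nN: "n \<in> N" for n
  proof -
    obtain v where v: "av n = enat v" using avf[OF Npos[OF nN]] by (cases "av n") auto
    show ?thesis unfolding trm_def cn cn' v by simp
  qed
  have "dsum g' g = (\<Sum>n\<in>D. trm n)" unfolding dsum_def D_def trm_def by simp
  also have "\<dots> = (\<Sum>n\<in>N. trm n)"
  proof (rule sum.mono_neutral_left[OF fN DN])
    show "\<forall>i\<in>N - D. trm i = 0"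
    proof
      fix i assume i: "i \<in> N - D"
      then have "Cn g' i = Cn g i" using Npos[of i] unfolding D_def by auto
      then show "trm i = 0" unfolding trm_def by simp
    qed
  qed
  also have "\<dots> = (\<Sum>n\<in>N. int (mg' n) - int (mg n))" using tN by (rule sum.cong[OF refl])
  also have "\<dots> = int (\<Sum>n\<in>N. mg' n) - int (\<Sum>n\<in>N. mg n)" by (simp add: sum_subtractf)
  also have "(\<Sum>n\<in>N. mg n) = card (meet g {a,b} finite)"
    unfolding mg_def by (rule sum_meet[OF fN]) (auto simp: N_def)
  also have "(\<Sum>n\<in>N. mg' n) = card (meet g' {a,b} finite)"
    unfolding mg'_def by (rule sum_meet[OF fN]) (auto simp: N_def)
  finally have "dsum g' g = int (card (meet g' {a,b} finite)) - int (card (meet g {a,b} finite))" .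
  then have "odd (dsum g' g)" using ocf by simp
  then show ?thesis using good' op fwd fD unfolding g'_def D_def by simp
qed



lemma dsum_N:
  assumes fN: "finite N" and DN: "{n. n > 0 \<and> Cn x n \<noteq> Cn y n} \<subseteq> N" and Np: "\<And>n. n \<in> N \<Longrightarrow> 0 < n"
  shows "dsum x y = (\<Sum>n\<in>N. int (the_enat (Cn x n)) - int (the_enat (Cn y n)))"
  unfolding dsum_def
proof (rule sum.mono_neutral_left[OF fN DN])
  show "\<forall>i\<in>N - {n. n > 0 \<and> Cn x n \<noteq> Cn y n}. int (the_enat (Cn x i)) - int (the_enat (Cn y i)) = 0"
  proof
    fix i assume "i \<in> N - {n. n > 0 \<and> Cn x n \<noteq> Cn y n}"
    then have "Cn x i = Cn y i" using Np[of i] by auto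
    then show "int (the_enat (Cn x i)) - int (the_enat (Cn y i)) = 0" by simp
  qed
qed

lemma dsum_add:
  assumes fxy: "finite {n. n > 0 \<and> Cn x n \<noteq> Cn y n}" and fyz: "finite {n. n > 0 \<and> Cn y n \<noteq> Cn z n}"
  shows "finite {n. n > 0 \<and> Cn x n \<noteq> Cn z n} \<and> dsum x z = dsum x y + dsum y z"
proof -
  define N where "N = {n. n > 0 \<and> Cn x n \<noteq> Cn y n} \<union> {n. n > 0 \<and> Cn y n \<noteq> Cn z n}"
  have fN: "finite N" unfolding N_def using fxy fyz by simp
  have Np: "\<And>n. n \<in> N \<Longrightarrow> 0 < n" unfolding N_def by auto
  have sxz: "{n. n > 0 \<and> Cn x n \<noteq> Cn z n} \<subseteq> N" unfolding N_def by auto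
  have sxy: "{n. n > 0 \<and> Cn x n \<noteq> Cn y n} \<subseteq> N" unfolding N_def by auto
  have syz: "{n. n > 0 \<and> Cn y n \<noteq> Cn z n} \<subseteq> N" unfolding N_def by auto
  have "dsum x z = (\<Sum>n\<in>N. int (the_enat (Cn x n)) - int (the_enat (Cn z n)))" by (rule dsum_N[OF fN sxz Np])
  also have "\<dots> = (\<Sum>n\<in>N. (int (the_enat (Cn x n)) - int (the_enat (Cn y n))) + (int (the_enat (Cn y n)) - int (the_enat (Cn z n))))"
    by simp
  also have "\<dots> = (\<Sum>n\<in>N. int (the_enat (Cn x n)) - int (the_enat (Cn y n))) + (\<Sum>n\<in>N. int (the_enat (Cn y n)) - int (the_enat (Cn z n)))"
    by (rule sum.distrib)
  also have "\<dots> = dsum x y + dsum y z" using dsum_N[OF fN sxy Np] dsum_N[OF fN syz Np] by simp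
  finally show ?thesis using finite_subset[OF sxz fN] by simp
qed

lemma induct_h:
  fixes f :: "'a \<Rightarrow> 'a"
  assumes gf: "good f"
  shows "swapidseq m h \<Longrightarrow> good (h \<circ> f) \<and> Copen (h \<circ> f) = Copen f \<and> Cfwd (h \<circ> f) = Cfwd f \<and>
    finite {n. n > 0 \<and> Cn (h \<circ> f) n \<noteq> Cn f n} \<and> (even (dsum (h \<circ> f) f) \<longleftrightarrow> even m)"
proof (induction rule: swapidseq.induct)
  case id
  then show ?case using gf by (simp add: dsum_def)
next
  case (comp_Suc n p a b)
  define g where "g = p \<circ> f"
  have gg: "good g" and og: "Copen g = Copen f" and fg: "Cfwd g = Cfwd f"
    and dg: "finite {n. n > 0 \<and> Cn g n \<noteq> Cn f n}" and eg: "even (dsum g f) \<longleftrightarrow> even n"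
    using comp_Suc.IH[folded g_def] by auto
  have st: "good (tr a b \<circ> g) \<and> Copen (tr a b \<circ> g) = Copen g \<and> Cfwd (tr a b \<circ> g) = Cfwd g \<and>
    finite {n. n > 0 \<and> Cn (tr a b \<circ> g) n \<noteq> Cn g n} \<and> odd (dsum (tr a b \<circ> g) g)"
    by (rule step[OF gg comp_Suc.hyps(2)])
  define g' where "g' = tr a b \<circ> g"
  have eq: "tr a b \<circ> p \<circ> f = g'" unfolding g'_def g_def by (simp add: o_assoc)
  have da: "finite {n. n > 0 \<and> Cn g' n \<noteq> Cn f n} \<and> dsum g' f = dsum g' g + dsum g f"
    using dsum_add[of g' g f] st dg unfolding g'_def[symmetric] by simp
  have st': "good g'" "Copen g' = Copen g" "Cfwd g' = Cfwd g" "odd (dsum g' g)"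
    using st unfolding g'_def[symmetric] by simp_all
  have par: "even (dsum g' f) \<longleftrightarrow> even (Suc n)" using da st'(4) eg by simp
  show ?case unfolding eq using st' da og fg par by simp
qed

lemma ic_conj:
  assumes bq: "bij q"
  shows "inv_closed (q \<circ> k \<circ> inv q) (q ` S) = inv_closed k S"
proof -
  have iq: "inj q" using bq by (rule bij_is_inj)
  have mem: "(q z \<in> q ` S) = (z \<in> S)" for z using iq by (simp add: inj_image_mem_iff)
  have qi: "q (inv q y) = y" for y using surj_f_inv_f[OF bij_is_surj[OF bq]] .
  have iqq: "inv q (q x) = x" for x using iq by simp
  have "inv_closed (q \<circ> k \<circ> inv q) (q ` S) = (\<forall>y. (k (inv q y) \<in> S) = (inv q y \<in> S))"
    unfolding inv_closed_def
  proof -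
    have "((q \<circ> k \<circ> inv q) y \<in> q ` S) = (k (inv q y) \<in> S)" for y using mem by simp
    moreover have "(y \<in> q ` S) = (inv q y \<in> S)" for y using mem[of "inv q y"] qi by simp
    ultimately show "(\<forall>a. ((q \<circ> k \<circ> inv q) a \<in> q ` S) = (a \<in> q ` S)) = (\<forall>y. (k (inv q y) \<in> S) = (inv q y \<in> S))"
      by simp
  qed
  also have "\<dots> = (\<forall>x. (k x \<in> S) = (x \<in> S))"
  proof
    assume "\<forall>y. (k (inv q y) \<in> S) = (inv q y \<in> S)"
    then show "\<forall>x. (k x \<in> S) = (x \<in> S)" using iqq by metis
  qed simp
  finally show ?thesis unfolding inv_closed_def .
qed

lemma cyc_conj:
  assumes bq: "bij q"
  shows "is_cycle (q \<circ> k \<circ> inv q) (q ` S) = is_cycle k S"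
proof -
  have iq: "inj q" using bq by (rule bij_is_inj)
  have qi: "q ` (inv q ` T) = T" for T by (simp add: image_image surj_f_inv_f[OF bij_is_surj[OF bq]])
  have psub: "(q ` T \<subset> q ` S) = (T \<subset> S)" for T using iq by (simp add: inj_image_subset_iff psubset_eq inj_image_eq_iff)
  have A: "(\<forall>T'. T' \<subset> q ` S \<and> T' \<noteq> {} \<longrightarrow> \<not> inv_closed (q \<circ> k \<circ> inv q) T') =
           (\<forall>T. T \<subset> S \<and> T \<noteq> {} \<longrightarrow> \<not> inv_closed k T)"
  proof
    assume H: "\<forall>T'. T' \<subset> q ` S \<and> T' \<noteq> {} \<longrightarrow> \<not> inv_closed (q \<circ> k \<circ> inv q) T'"
    show "\<forall>T. T \<subset> S \<and> T \<noteq> {} \<longrightarrow> \<not> inv_closed k T"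
    proof (intro allI impI)
      fix T assume T: "T \<subset> S \<and> T \<noteq> {}"
      then have "q ` T \<subset> q ` S \<and> q ` T \<noteq> {}" using psub by simp
      then have "\<not> inv_closed (q \<circ> k \<circ> inv q) (q ` T)" using H by blast
      then show "\<not> inv_closed k T" using ic_conj[OF bq] by simp
    qed
  next
    assume H: "\<forall>T. T \<subset> S \<and> T \<noteq> {} \<longrightarrow> \<not> inv_closed k T"
    show "\<forall>T'. T' \<subset> q ` S \<and> T' \<noteq> {} \<longrightarrow> \<not> inv_closed (q \<circ> k \<circ> inv q) T'"
    proof (intro allI impI)
      fix T' assume T': "T' \<subset> q ` S \<and> T' \<noteq> {}"
      define T where "T = inv q ` T'"
      have TT: "q ` T = T'" unfolding T_def by (rule qi)
      then have "T \<subset> S \<and> T \<noteq> {}" using T' psub[of T] by auto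
      then have "\<not> inv_closed k T" using H by blast
      then show "\<not> inv_closed (q \<circ> k \<circ> inv q) T'" using ic_conj[OF bq, of k T] TT by simp
    qed
  qed
  show ?thesis unfolding is_cycle_def using A ic_conj[OF bq, of k S] by simp
qed

lemma ecard_conj:
  assumes bq: "bij q"
  shows "ecard {S'. is_cycle (q \<circ> k \<circ> inv q) S' \<and> P S'} = ecard {S. is_cycle k S \<and> P (q ` S)}"
proof -
  have iq: "inj q" using bq by (rule bij_is_inj)
  have qi: "q ` (inv q ` T) = T" for T by (simp add: image_image surj_f_inv_f[OF bij_is_surj[OF bq]])
  have seq: "{S'. is_cycle (q \<circ> k \<circ> inv q) S' \<and> P S'} = image q ` {S. is_cycle k S \<and> P (q ` S)}"
  proof (rule set_eqI)
    fix S'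
    show "S' \<in> {S'. is_cycle (q \<circ> k \<circ> inv q) S' \<and> P S'} \<longleftrightarrow> S' \<in> image q ` {S. is_cycle k S \<and> P (q ` S)}"
    proof
      assume "S' \<in> {S'. is_cycle (q \<circ> k \<circ> inv q) S' \<and> P S'}"
      then have "is_cycle (q \<circ> k \<circ> inv q) (q ` (inv q ` S')) \<and> P (q ` (inv q ` S'))" using qi by simp
      then have "inv q ` S' \<in> {S. is_cycle k S \<and> P (q ` S)}" using cyc_conj[OF bq] by simp
      then show "S' \<in> image q ` {S. is_cycle k S \<and> P (q ` S)}" by (rule rev_image_eqI) (rule qi[symmetric])
    next
      assume "S' \<in> image q ` {S. is_cycle k S \<and> P (q ` S)}"
      then obtain S where "S' = q ` S" "is_cycle k S" "P (q ` S)" by blast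
      then show "S' \<in> {S'. is_cycle (q \<circ> k \<circ> inv q) S' \<and> P S'}" using cyc_conj[OF bq] by simp
    qed
  qed
  have "inj_on (image q) {S. is_cycle k S \<and> P (q ` S)}" using iq by (simp add: inj_on_def inj_image_eq_iff)
  then have "ecard (image q ` {S. is_cycle k S \<and> P (q ` S)}) = ecard {S. is_cycle k S \<and> P (q ` S)}" by (rule ecard_image)
  then show ?thesis unfolding seq .
qed

lemma conj_inv:
  fixes q k :: "'a \<Rightarrow> 'a"
  assumes bq: "bij q"
  shows "Cn (q \<circ> k \<circ> inv q) n = Cn k n \<and> Cfwd (q \<circ> k \<circ> inv q) = Cfwd k \<and> Copen (q \<circ> k \<circ> inv q) = Copen k"
proof -
  have iq: "inj q" using bq by (rule bij_is_inj)
  have ri: "range (inv q) = UNIV" using inj_imp_surj_inv[OF iq] .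
  have "range (q \<circ> k \<circ> inv q) = q ` k ` range (inv q)" by (simp add: image_comp)
  then have rg: "range (q \<circ> k \<circ> inv q) = q ` range k" unfolding ri .
  have dif: "q ` S - range (q \<circ> k \<circ> inv q) = q ` (S - range k)" for S
    unfolding rg using iq by (simp add: image_set_diff)
  have fi: "finite (q ` S) = finite S" for S using iq by (simp add: finite_image_iff inj_on_subset)
  have ca: "card (q ` S) = card S" for S using iq by (simp add: card_image inj_on_subset)
  have "Cn (q \<circ> k \<circ> inv q) n = ecard {S. is_cycle k S \<and> (finite (q ` S) \<and> card (q ` S) = n)}"
    unfolding Cn_def using ecard_conj[OF bq, of k "\<lambda>S. finite S \<and> card S = n"] by simp
  also have "\<dots> = Cn k n" unfolding Cn_def fi ca by simp
  finally have 1: "Cn (q \<circ> k \<circ> inv q) n = Cn k n" .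
  have "Cfwd (q \<circ> k \<circ> inv q) = ecard {S. is_cycle k S \<and> (infinite (q ` S) \<and> q ` S - range (q \<circ> k \<circ> inv q) \<noteq> {})}"
    unfolding Cfwd_def fwd_cycle_def
    using ecard_conj[OF bq, of k "\<lambda>S. infinite S \<and> S - range (q \<circ> k \<circ> inv q) \<noteq> {}"] by simp
  also have "\<dots> = Cfwd k" unfolding Cfwd_def fwd_cycle_def fi dif by simp
  finally have 2: "Cfwd (q \<circ> k \<circ> inv q) = Cfwd k" .
  have "Copen (q \<circ> k \<circ> inv q) = ecard {S. is_cycle k S \<and> (infinite (q ` S) \<and> \<not> (q ` S - range (q \<circ> k \<circ> inv q) \<noteq> {}))}"
    unfolding Copen_def open_cycle_def
    using ecard_conj[OF bq, of k "\<lambda>S. infinite S \<and> \<not> (S - range (q \<circ> k \<circ> inv q) \<noteq> {})"] by simp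
  also have "\<dots> = Copen k" unfolding Copen_def open_cycle_def fi dif by simp
  finally have 3: "Copen (q \<circ> k \<circ> inv q) = Copen k" .
  show ?thesis using 1 2 3 by simp
qed



lemma approx_even_sym: "approx_even f k \<longleftrightarrow> approx_even k f"
proof -
  have s: "{n. n > 0 \<and> Cn f n \<noteq> Cn k n} = {n. n > 0 \<and> Cn k n \<noteq> Cn f n}" by auto
  have "(\<Sum>n\<in>{n. n > 0 \<and> Cn f n \<noteq> Cn k n}. int (the_enat (Cn f n)) - int (the_enat (Cn k n))) =
        - (\<Sum>n\<in>{n. n > 0 \<and> Cn k n \<noteq> Cn f n}. int (the_enat (Cn k n)) - int (the_enat (Cn f n)))"
    unfolding s by (simp add: sum_negf[symmetric])
  then show ?thesis unfolding approx_even_def approx_fin_def s by auto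
qed

theorem mainTheorem17:
  fixes f h :: "'a \<Rightarrow> 'a"
  assumes "countable (UNIV :: 'a set)" and "infinite (UNIV :: 'a set)"
    and "inj f"
    and "Copen f + Cfwd f = 1"
    and "\<forall>n>0. Cn f n < \<infinity>"
    and "permutation h" and "evenperm h"
  shows "approx_even (h \<circ> f) f \<and> approx_even f (f \<circ> h)"
proof -
  have gf: "good f" using assms(3,4,5) unfolding good_def by simp
  obtain m where sm: "swapidseq m h" using assms(6) unfolding permutation_def by blast
  have "evenperm h = even m" by (rule evenperm_unique[OF sm refl])
  then have em: "even m" using assms(7) by simp
  define k where "k = h \<circ> f"
  have I: "good k \<and> Copen k = Copen f \<and> Cfwd k = Cfwd f \<and>
    finite {n. n > 0 \<and> Cn k n \<noteq> Cn f n} \<and> (even (dsum k f) \<longleftrightarrow> even m)"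
    using induct_h[OF gf sm] unfolding k_def[symmetric] .
  then have gk: "good k" and ok: "Copen k = Copen f" and fk: "Cfwd k = Cfwd f"
    and dk: "finite {n. n > 0 \<and> Cn k n \<noteq> Cn f n}" and ek: "even (dsum k f)"
    using em by auto
  have ck: "\<forall>n>0. Cn k n < \<infinity>" using gk unfolding good_def by simp
  have cf: "\<forall>n>0. Cn f n < \<infinity>" using assms(5) .
  have af: "approx_fin k f" unfolding approx_fin_def using ok fk dk ck cf by auto
  have A1: "approx_even k f" unfolding approx_even_def using af ek unfolding dsum_def by simp
  have bh: "bij h" using assms(6) by (rule permutation_bijective)
  have bq: "bij (inv h)" using bh by (rule bij_imp_bij_inv)
  have "inv h \<circ> k \<circ> inv (inv h) = f \<circ> h"
    unfolding k_def inv_inv_eq[OF bh] using bij_is_inj[OF bh] by (simp add: o_assoc inv_o_cancel)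
  then have cj: "Cn (f \<circ> h) n = Cn k n" "Cfwd (f \<circ> h) = Cfwd k" "Copen (f \<circ> h) = Copen k" for n
    using conj_inv[OF bq, of k n] by simp_all
  have "approx_even f (f \<circ> h) = approx_even f k"
    unfolding approx_even_def approx_fin_def cj ..
  also have "\<dots> = approx_even k f" by (rule approx_even_sym)
  finally have A2: "approx_even f (f \<circ> h)" using A1 by simp
  show ?thesis using A1 A2 unfolding k_def by simp
qed

end
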